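(* Let $m,n\ge1$ and let $\mathcal G=\mathcal G(A,\tau)$ be the Kac–Moody superalgebra described below. Then in $\mathcal G$: (1) $[e_{ij},e_{kl}]=\delta_{j-1,k}e_{il}$ for all $i\ge j$, $k\ge l$ in $\Omega$ with $(i,j)\ge(k,l)$ lexicographically and $k<m+n$; (2) $[e_{m+n,i},[e_{m+n,j},e_{m+n,k}]]=0$ for all $i,j,k\in\Omega$; (3) $[[e_{m+n,i},e_{m+n,j}],[e_{m+n,k},e_{m+n,l}]]=0$ for all $i,j,k,l\in\Omega$.
   Context: Let $k$ be a field with $\mathrm{char}(k)\ne2,3$. $\Omega=\{1,\dots,m+n\}$, $\tau=\{n\}$, and $A=(a_{ij})$ with $a_{ii}=2$ for $i\ne n$, $a_{nn}=0$, $a_{n,n+1}=1$, $a_{m+n,m+n-1}=-2$, $a_{ij}=-1$ if $|i-j|=1$ and $(i,j)\notin\{(n,n+1),(m+n,m+n-1)\}$, $a_{ij}=0$ if $|i-j|>1$. The Kac–Moody superalgebra $\mathcal G(A,\tau)$ is the Lie superalgebra generated by $e_i,h_i,f_i$ ($i\in\Omega$), with $e_n,f_n$ odd and all other generators even, subject to: $[h_i,h_j]=0$; $[e_i,f_j]=\delta_{ij}h_i$; $[e_j,h_i]=-a_{ij}e_j$; $[h_i,f_j]=-a_{ij}f_j$; $(\mathrm{ad}e_i)^{1-n_{ij}}e_j=0$ and $e_i(\widetilde{\mathrm{ad}}e_j)^{1-n_{ji}}=0$ for $i>j$; $[[e_{k+1},e_k],[e_k,e_{k-1}]]=0$ for $k\in\eta$;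 and the same relations with $f$'s in place of $e$'s. Here $(\mathrm{ad}x)^ny=[x,[x,\dots,[x,y]\dots]]$, $x(\widetilde{\mathrm{ad}}y)^n=[\dots[[x,y],y],\dots,y]$ ($n$ times), $n_{ij}=a_{ij}$ if $a_{ii}=2$ or $a_{ij}=0$, $n_{ij}=-1$ if $a_{ii}=0\ne a_{ij}$, and $\eta$ is the set of $k$ with $k\in\tau$, $k\pm1\notin\tau$ (and $k\pm1\in\Omega$), $a_{kk}=0$, $a_{k+1,k-1}=0$, $a_{k,k+1}+a_{k,k-1}=0$. Notation: for $i>j$, $e_{ij}=[e_i,[e_{i-1},[\dots,[e_{j+1},e_j]\dots]]]$, and $e_{ii}=e_i$. Lexicographic order on pairs: $(i,j)>(k,l)$ iff $i>k$, or $i=k$ and $j>l$. *)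

theory Defs
  imports Main HOL.Vector_Spaces
begin

definition hom_part :: "'v set \<Rightarrow> 'v set \<Rightarrow> bool \<Rightarrow> 'v set" where
  "hom_part V0 V1 p = (if p then V1 else V0)"

definition ssign :: "bool \<Rightarrow> bool \<Rightarrow> 'v::ab_group_add \<Rightarrow> 'v" where
  "ssign p q x = (if p \<and> q then - x else x)"

definition lie_superalgebra ::
  "('k::field \<Rightarrow> 'v::ab_group_add \<Rightarrow> 'v) \<Rightarrow> 'v set \<Rightarrow> 'v set \<Rightarrow> ('v \<Rightarrow> 'v \<Rightarrow> 'v) \<Rightarrow> bool" where
  "lie_superalgebra sc V0 V1 br \<longleftrightarrow>
     vector_space sc \<and>
     (\<forall>p. 0 \<in> hom_part V0 V1 p \<and>
          (\<forall>x\<in>hom_part V0 V1 p. \<forall>y\<in>hom_part V0 V1 p. x + y \<in> hom_part V0 V1 p) \<and>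
          (\<forall>c. \<forall>x\<in>hom_part V0 V1 p. sc c x \<in> hom_part V0 V1 p)) \<and>
     V0 \<inter> V1 = {0} \<and>
     (\<forall>v. \<exists>a\<in>V0. \<exists>b\<in>V1. v = a + b) \<and>
     (\<forall>x y z. br (x + y) z = br x z + br y z) \<and>
     (\<forall>x y z. br x (y + z) = br x y + br x z) \<and>
     (\<forall>c x y. br (sc c x) y = sc c (br x y)) \<and>
     (\<forall>c x y. br x (sc c y) = sc c (br x y)) \<and>
     (\<forall>p q. \<forall>x\<in>hom_part V0 V1 p. \<forall>y\<in>hom_part V0 V1 q.
          br x y \<in> hom_part V0 V1 (p \<noteq> q)) \<and>
     (\<forall>p q. \<forall>x\<in>hom_part V0 V1 p. \<forall>y\<in>hom_part V0 V1 q.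
          br x y = - ssign p q (br y x)) \<and>
     (\<forall>p q r. \<forall>x\<in>hom_part V0 V1 p. \<forall>y\<in>hom_part V0 V1 q. \<forall>z\<in>hom_part V0 V1 r.
          br x (br y z) = br (br x y) z + ssign p q (br y (br x z)))"

definition cartan :: "nat \<Rightarrow> nat \<Rightarrow> nat \<Rightarrow> nat \<Rightarrow> int" where
  "cartan m n i j =
     (if i = j then (if i = n then 0 else 2)
      else if i = n \<and> j = n + 1 then 1
      else if i = m + n \<and> j = m + n - 1 then -2
      else if i = j + 1 \<or> j = i + 1 then -1
      else 0)"

definition nmat :: "(nat \<Rightarrow> nat \<Rightarrow> int) \<Rightarrow> nat \<Rightarrow> nat \<Rightarrow> int" where
  "nmat a i j = (if a i i = 2 \<or> a i j = 0 then a i j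
                 else if a i i = 0 \<and> a i j \<noteq> 0 then -1 else 0)"

definition eta :: "nat set \<Rightarrow> nat set \<Rightarrow> (nat \<Rightarrow> nat \<Rightarrow> int) \<Rightarrow> nat set" where
  "eta Om tau a = {k. k \<in> tau \<and> k + 1 \<notin> tau \<and> k - 1 \<notin> tau \<and> k + 1 \<in> Om \<and> k - 1 \<in> Om \<and>
       a k k = 0 \<and> a (k + 1) (k - 1) = 0 \<and> a k (k + 1) + a k (k - 1) = 0}"

definition adpow :: "('v \<Rightarrow> 'v \<Rightarrow> 'v) \<Rightarrow> 'v \<Rightarrow> nat \<Rightarrow> 'v \<Rightarrow> 'v" where
  "adpow br x k y = (br x ^^ k) y"
definition radpow :: "('v \<Rightarrow> 'v \<Rightarrow> 'v) \<Rightarrow> 'v \<Rightarrow> 'v \<Rightarrow> nat \<Rightarrow> 'v" where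
  "radpow br y x k = ((\<lambda>z. br z x) ^^ k) y"

definition km_rels ::
  "('k::field \<Rightarrow> 'v::ab_group_add \<Rightarrow> 'v) \<Rightarrow> 'v set \<Rightarrow> 'v set \<Rightarrow> ('v \<Rightarrow> 'v \<Rightarrow> 'v) \<Rightarrow>
   nat set \<Rightarrow> nat set \<Rightarrow> (nat \<Rightarrow> nat \<Rightarrow> int) \<Rightarrow>
   (nat \<Rightarrow> 'v) \<Rightarrow> (nat \<Rightarrow> 'v) \<Rightarrow> (nat \<Rightarrow> 'v) \<Rightarrow> bool" where
  "km_rels sc V0 V1 br Om tau a e h f \<longleftrightarrow>
     (\<forall>i\<in>Om. h i \<in> V0 \<and> e i \<in> hom_part V0 V1 (i \<in> tau) \<and> f i \<in> hom_part V0 V1 (i \<in> tau)) \<and>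
     (\<forall>i\<in>Om. \<forall>j\<in>Om. br (h i) (h j) = 0) \<and>
     (\<forall>i\<in>Om. \<forall>j\<in>Om. br (e i) (f j) = (if i = j then h i else 0)) \<and>
     (\<forall>i\<in>Om. \<forall>j\<in>Om. br (e j) (h i) = sc (- of_int (a i j)) (e j)) \<and>
     (\<forall>i\<in>Om. \<forall>j\<in>Om. br (h i) (f j) = sc (- of_int (a i j)) (f j)) \<and>
     (\<forall>i\<in>Om. \<forall>j\<in>Om. i > j \<longrightarrow>
        adpow br (e i) (nat (1 - nmat a i j)) (e j) = 0 \<and>
        radpow br (e i) (e j) (nat (1 - nmat a j i)) = 0 \<and>
        adpow br (f i) (nat (1 - nmat a i j)) (f j) = 0 \<and>
        radpow br (f i) (f j) (nat (1 - nmat a j i)) = 0) \<and>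
     (\<forall>k\<in>eta Om tau a.
        br (br (e (k + 1)) (e k)) (br (e k) (e (k - 1))) = 0 \<and>
        br (br (f (k + 1)) (f k)) (br (f k) (f (k - 1))) = 0)"

text \<open>e_ij = [e_i,[e_(i-1),...,[e_(j+1),e_j]...]] for i > j, e_ii = e_i.\<close>
primrec Eij :: "('v \<Rightarrow> 'v \<Rightarrow> 'v) \<Rightarrow> (nat \<Rightarrow> 'v) \<Rightarrow> nat \<Rightarrow> nat \<Rightarrow> 'v" where
  "Eij br e 0 j = e 0"
| "Eij br e (Suc i) j = (if Suc i \<le> j then e (Suc i) else br (e (Suc i)) (Eij br e i j))"

end

theory Submission
  imports Defs
begin

locale KM =
  fixes sc :: "'k::field \<Rightarrow> 'v::ab_group_add \<Rightarrow> 'v"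
    and br :: "'v \<Rightarrow> 'v \<Rightarrow> 'v"
    and V0 V1 :: "'v set"
    and e h f :: "nat \<Rightarrow> 'v"
    and m n :: nat
  assumes m1: "m \<ge> 1" and n1: "n \<ge> 1"
    and two: "(2::'k) \<noteq> 0" and three: "(3::'k) \<noteq> 0"
    and LS: "lie_superalgebra sc V0 V1 br"
    and KR: "km_rels sc V0 V1 br {1..m+n} {n} (cartan m n) e h f"
begin

lemma VS: "vector_space sc" using LS unfolding lie_superalgebra_def by blast

sublocale vs: vector_space sc by (rule VS)

definition hp :: "bool \<Rightarrow> 'v \<Rightarrow> bool" where "hp p x \<longleftrightarrow> x \<in> hom_part V0 V1 p"
definition H :: "'v \<Rightarrow> bool" where "H x \<longleftrightarrow> (\<exists>p. hp p x)"

lemmas L = LS[unfolded lie_superalgebra_def]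
lemma add_l: "br (x + y) z = br x z + br y z"
  using L[THEN conjunct2, THEN conjunct2, THEN conjunct2, THEN conjunct2, THEN conjunct1] by blast
lemma add_r: "br x (y + z) = br x y + br x z"
  using L[THEN conjunct2, THEN conjunct2, THEN conjunct2, THEN conjunct2, THEN conjunct2, THEN conjunct1] by blast
lemma br0l[simp]: "br 0 y = 0" using add_l[of 0 0 y] by simp
lemma br0r[simp]: "br x 0 = 0" using add_r[of x 0 0] by simp
lemma negl[simp]: "br (- x) y = - br x y"
  using add_l[of x "-x" y] by (simp add: add_eq_0_iff)
lemma negr[simp]: "br x (- y) = - br x y"
  using add_r[of x y "-y"] by (simp add: add_eq_0_iff)
lemma scl[simp]: "br (sc c x) y = sc c (br x y)"
  using L[THEN conjunct2, THEN conjunct2, THEN conjunct2, THEN conjunct2, THEN conjunct2, THEN conjunct2, THEN conjunct1] by blast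
lemma scr[simp]: "br x (sc c y) = sc c (br x y)"
  using L[THEN conjunct2, THEN conjunct2, THEN conjunct2, THEN conjunct2, THEN conjunct2, THEN conjunct2, THEN conjunct2, THEN conjunct1] by blast
lemma hp_br: "hp p x \<Longrightarrow> hp q y \<Longrightarrow> hp (p \<noteq> q) (br x y)"
  using L[THEN conjunct2, THEN conjunct2, THEN conjunct2, THEN conjunct2, THEN conjunct2, THEN conjunct2, THEN conjunct2, THEN conjunct2, THEN conjunct1] unfolding hp_def by blast
lemma anti: "hp p x \<Longrightarrow> hp q y \<Longrightarrow> br x y = - ssign p q (br y x)"
  using L[THEN conjunct2, THEN conjunct2, THEN conjunct2, THEN conjunct2, THEN conjunct2, THEN conjunct2, THEN conjunct2, THEN conjunct2, THEN conjunct2, THEN conjunct1] unfolding hp_def by blast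
lemma jac: "hp p x \<Longrightarrow> hp q y \<Longrightarrow> hp r z \<Longrightarrow>
   br x (br y z) = br (br x y) z + ssign p q (br y (br x z))"
  using L[THEN conjunct2, THEN conjunct2, THEN conjunct2, THEN conjunct2, THEN conjunct2, THEN conjunct2, THEN conjunct2, THEN conjunct2, THEN conjunct2, THEN conjunct2] unfolding hp_def by blast

lemma ss0[simp]: "ssign p q 0 = 0" by (simp add: ssign_def)
lemma ssF1[simp]: "ssign False q x = x" by (simp add: ssign_def)
lemma ssF2[simp]: "ssign p False x = x" by (simp add: ssign_def)
lemma ssTT[simp]: "ssign True True x = - x" by (simp add: ssign_def)
lemma ss_eq0[simp]: "ssign p q x = 0 \<longleftrightarrow> x = 0" by (simp add: ssign_def)
lemma ss_brl[simp]: "br (ssign p q x) y = ssign p q (br x y)" by (simp add: ssign_def)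
lemma ss_brr[simp]: "br y (ssign p q x) = ssign p q (br y x)" by (simp add: ssign_def)

lemma H_br: "H x \<Longrightarrow> H y \<Longrightarrow> H (br x y)" using hp_br unfolding H_def by blast

lemma anti0: assumes "H x" "H y" "br y x = 0" shows "br x y = 0"
proof -
  obtain p q where "hp p x" "hp q y" using assms unfolding H_def by blast
  from anti[OF this] show ?thesis using assms(3) by simp
qed

lemma jacH: assumes "H x" "H y" "H z"
  obtains p q where "br x (br y z) = br (br x y) z + ssign p q (br y (br x z))"
proof -
  obtain p q r where "hp p x" "hp q y" "hp r z" using assms unfolding H_def by blast
  from jac[OF this] that show ?thesis by blast
qed

lemma jA: assumes "H x" "H y" "H z" "br y (br x z) = 0" shows "br x (br y z) = br (br x y) z"
proof -
  obtain p q where "br x (br y z) = br (br x y) z + ssign p q (br y (br x z))" using jacH[OF assms(1-3)] by blast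
  thus ?thesis using assms(4) by (simp only: ss0 add_0_right)
qed
lemma jB: assumes "H x" "H y" "H z" "br (br x y) z = 0" "br y (br x z) = 0" shows "br x (br y z) = 0"
proof -
  obtain p q where "br x (br y z) = br (br x y) z + ssign p q (br y (br x z))" using jacH[OF assms(1-3)] by blast
  thus ?thesis using assms(4,5) by (simp only: ss0 add_0_right)
qed
lemma jC: assumes "H x" "H y" "H z" "br x (br y z) = 0" "br y (br x z) = 0" shows "br (br x y) z = 0"
proof -
  obtain p q where "br x (br y z) = br (br x y) z + ssign p q (br y (br x z))" using jacH[OF assms(1-3)] by blast
  thus ?thesis using assms(4,5) by (simp only: ss0 add_0_right add_0_left)
qed

lemma anti_l0: assumes "H a" "H b" "br (br b a) c = 0" shows "br (br a b) c = 0"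
proof -
  obtain p q where "hp p a" "hp q b" using assms unfolding H_def by blast
  from anti[OF this] have "br a b = - ssign p q (br b a)" .
  thus ?thesis using assms by simp
qed
lemma anti_r0: assumes "H a" "H b" "br c (br b a) = 0" shows "br c (br a b) = 0"
proof -
  obtain p q where "hp p a" "hp q b" using assms unfolding H_def by blast
  from anti[OF this] have "br a b = - ssign p q (br b a)" .
  thus ?thesis using assms by simp
qed

lemma two_zero: assumes "x + x = 0" shows "x = (0::'v)"
proof -
  have "sc 2 x = sc (1+1) x" by simp
  also have "\<dots> = x + x" by (simp only: vs.scale_left_distrib vs.scale_one)
  finally have "sc 2 x = 0" using assms by simp
  thus ?thesis using two by simp
qed
lemma three_zero: assumes "x + x + x = 0" shows "x = (0::'v)"
proof -
  have "sc 3 x = sc (1+1+1) x" by simp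
  also have "\<dots> = x + x + x" by (simp only: vs.scale_left_distrib vs.scale_one)
  finally have "sc 3 x = 0" using assms by simp
  thus ?thesis using three by simp
qed

lemma self_even: assumes "hp False x" shows "br x x = 0"
proof -
  have "br x x = - br x x" using anti[OF assms assms] by simp
  hence "br x x + br x x = 0" by (simp add: eq_neg_iff_add_eq_0)
  thus ?thesis by (rule two_zero)
qed


abbreviation NN where "NN \<equiv> m + n"

lemmas K = KR[unfolded km_rels_def]

lemma ehp: "i \<in> {1..NN} \<Longrightarrow> hp (i = n) (e i)"
  using K[THEN conjunct1] unfolding hp_def by auto
lemma fhp: "i \<in> {1..NN} \<Longrightarrow> hp (i = n) (f i)"
  using K[THEN conjunct1] unfolding hp_def by auto
lemma hhp: "i \<in> {1..NN} \<Longrightarrow> hp False (h i)"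
  using K[THEN conjunct1] unfolding hp_def hom_part_def by auto
lemma He: "i \<in> {1..NN} \<Longrightarrow> H (e i)" using ehp H_def by blast
lemma Hf: "i \<in> {1..NN} \<Longrightarrow> H (f i)" using fhp H_def by blast
lemma Hh: "i \<in> {1..NN} \<Longrightarrow> H (h i)" using hhp H_def by blast

lemma e_f: "i \<in> {1..NN} \<Longrightarrow> j \<in> {1..NN} \<Longrightarrow> br (e i) (f j) = (if i = j then h i else 0)"
  using K[THEN conjunct2, THEN conjunct2, THEN conjunct1] by blast
lemma e_h: "i \<in> {1..NN} \<Longrightarrow> j \<in> {1..NN} \<Longrightarrow> br (e j) (h i) = sc (- of_int (cartan m n i j)) (e j)"
  using K[THEN conjunct2, THEN conjunct2, THEN conjunct2, THEN conjunct1] by blast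
lemma serre: "i \<in> {1..NN} \<Longrightarrow> j \<in> {1..NN} \<Longrightarrow> j < i \<Longrightarrow>
   adpow br (e i) (nat (1 - nmat (cartan m n) i j)) (e j) = 0 \<and>
   radpow br (e i) (e j) (nat (1 - nmat (cartan m n) j i)) = 0"
  using K[THEN conjunct2, THEN conjunct2, THEN conjunct2, THEN conjunct2, THEN conjunct2, THEN conjunct1] by blast
lemma eta_rel: "k \<in> eta {1..NN} {n} (cartan m n) \<Longrightarrow>
   br (br (e (k + 1)) (e k)) (br (e k) (e (k - 1))) = 0"
  using K[THEN conjunct2, THEN conjunct2, THEN conjunct2, THEN conjunct2, THEN conjunct2, THEN conjunct2] by blast

lemma far1: assumes "i \<in> {1..NN}" "j \<in> {1..NN}" "j + 1 < i" shows "br (e i) (e j) = 0"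
proof -
  have "cartan m n i j = 0" using assms by (auto simp: cartan_def)
  hence "nat (1 - nmat (cartan m n) i j) = 1" by (simp add: nmat_def)
  thus ?thesis using serre[OF assms(1,2)] assms(3) by (simp add: adpow_def)
qed
lemma far: assumes "i \<in> {1..NN}" "j \<in> {1..NN}" "j + 1 < i \<or> i + 1 < j" shows "br (e i) (e j) = 0"
  using assms far1 anti0 He by blast

lemma sq: assumes "j \<ge> 1" "j + 1 < NN" shows "br (e (j+1)) (br (e (j+1)) (e j)) = 0"
proof -
  have "cartan m n (j+1) j = -1" using assms by (auto simp: cartan_def)
  moreover have "cartan m n (j+1) (j+1) = 0 \<or> cartan m n (j+1) (j+1) = 2" by (auto simp: cartan_def)
  ultimately have "nat (1 - nmat (cartan m n) (j+1) j) = 2" by (auto simp: nmat_def)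
  thus ?thesis using serre[of "j+1" j] assms by (simp add: adpow_def eval_nat_numeral)
qed

lemma cube: "br (e NN) (br (e NN) (br (e NN) (e (NN - 1)))) = 0"
proof -
  have "cartan m n NN (NN - 1) = -2" using m1 n1 by (auto simp: cartan_def)
  moreover have "cartan m n NN NN = 2" using m1 n1 by (auto simp: cartan_def)
  ultimately have "nat (1 - nmat (cartan m n) NN (NN - 1)) = 3" by (auto simp: nmat_def)
  thus ?thesis using serre[of NN "NN - 1"] m1 n1 by (simp add: adpow_def eval_nat_numeral)
qed

lemma rsq: assumes "j \<ge> 1" "j + 1 \<le> NN" shows "br (br (e (j+1)) (e j)) (e j) = 0"
proof -
  have "cartan m n j (j+1) = (if j = n then 1 else -1)" using assms by (auto simp: cartan_def)
  moreover have "cartan m n j j = (if j = n then 0 else 2)" by (auto simp: cartan_def)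
  ultimately have "nat (1 - nmat (cartan m n) j (j+1)) = 2" by (auto simp: nmat_def)
  thus ?thesis using serre[of "j+1" j] assms by (simp add: radpow_def eval_nat_numeral)
qed

lemma eta2: assumes "n \<ge> 2" shows "br (br (e (n+1)) (e n)) (br (e n) (e (n-1))) = 0"
proof -
  have "n \<in> eta {1..NN} {n} (cartan m n)" using assms m1 by (auto simp: eta_def cartan_def)
  from eta_rel[OF this] show ?thesis .
qed


lemma selfz: assumes "i \<in> {1..NN}" shows "br (e i) (e i) = 0"
proof (cases "i = n")
  case False
  thus ?thesis using ehp[OF assms] self_even by simp
next
  case True
  let ?p = "n + 1"
  let ?X = "br (e n) (e n)"
  have pO: "?p \<in> {1..NN}" and nO: "n \<in> {1..NN}" using m1 n1 by auto
  have r: "br (br (e ?p) (e n)) (e n) = 0" using rsq[of n] m1 n1 by simp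
  have eX: "br (e ?p) ?X = 0"
    by (rule jB) (use He[OF pO] He[OF nO] r anti0 H_br in auto)
  have fe: "br (f ?p) (e n) = 0" using anti0[OF Hf[OF pO] He[OF nO]] e_f[OF nO pO] by simp
  have fX: "br (f ?p) ?X = 0"
    by (rule jB) (use Hf[OF pO] He[OF nO] fe in auto)
  have hpX: "hp False ?X" using hp_br[OF ehp[OF nO] ehp[OF nO]] by simp
  have fpp: "hp False (f ?p)" "hp False (e ?p)" using fhp[OF pO] ehp[OF pO] by auto
  have j1: "br (f ?p) (br (e ?p) ?X) = br (br (f ?p) (e ?p)) ?X + br (e ?p) (br (f ?p) ?X)"
    using jac[OF fpp hpX] by simp
  have fpep: "br (f ?p) (e ?p) = - h ?p"
    using anti[OF fpp(1) fpp(2)] e_f[OF pO pO] by simp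
  have hX0: "br (h ?p) ?X = 0" using j1 eX fX fpep by simp
  define c where "c = (of_int (cartan m n ?p n) :: 'k)"
  have he: "br (h ?p) (e n) = sc c (e n)"
    using anti[OF hhp[OF pO] ehp[OF nO]] e_h[OF pO nO] unfolding c_def by simp
  have j2: "br (h ?p) ?X = br (br (h ?p) (e n)) (e n) + br (e n) (br (h ?p) (e n))"
    using jac[OF hhp[OF pO] ehp[OF nO] ehp[OF nO]] by simp
  have "sc c (?X + ?X) = 0" using j2 hX0 he by (simp add: vs.scale_right_distrib)
  moreover have "c \<noteq> 0"
  proof -
    have "cartan m n ?p n = -1 \<or> cartan m n ?p n = -2" by (auto simp: cartan_def)
    thus ?thesis unfolding c_def using two by auto
  qed
  ultimately have "?X + ?X = 0" by simp
  from two_zero[OF this] show ?thesis using True by simp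
qed

abbreviation E where "E i j \<equiv> Eij br e i j"

lemma E_diag[simp]: "E j j = e j" by (cases j) auto
lemma E_low: "i \<le> j \<Longrightarrow> E i j = e i" by (cases i) auto
lemma E_step: "j < i \<Longrightarrow> E i j = br (e i) (E (i - 1) j)" by (cases i) auto
lemma E_stepS: "j \<le> i \<Longrightarrow> E (Suc i) j = br (e (Suc i)) (E i j)" by simp
declare Eij.simps[simp del]

lemma HE: "1 \<le> j \<Longrightarrow> j \<le> i \<Longrightarrow> i \<le> NN \<Longrightarrow> H (E i j)"
proof (induction i)
  case 0 thus ?case by simp
next
  case (Suc i)
  show ?case
  proof (cases "Suc i = j")
    case True thus ?thesis using He Suc.prems by auto
  next
    case False
    hence "E (Suc i) j = br (e (Suc i)) (E i j)" using Suc.prems E_step[of j "Suc i"] by simp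
    thus ?thesis using Suc False He[of "Suc i"] H_br by auto
  qed
qed

lemma Sep_hi: "1 \<le> l \<Longrightarrow> l \<le> k \<Longrightarrow> k + 1 < p \<Longrightarrow> p \<le> NN \<Longrightarrow> br (e p) (E k l) = 0"
proof (induction k)
  case 0 thus ?case by simp
next
  case (Suc k)
  show ?case
  proof (cases "Suc k = l")
    case True thus ?thesis using Suc.prems far[of p l] by auto
  next
    case False
    hence eq: "E (Suc k) l = br (e (Suc k)) (E k l)" using Suc.prems E_step[of l "Suc k"] by simp
    have "br (e p) (br (e (Suc k)) (E k l)) = 0"
      by (rule jB) (use Suc False He HE far in auto)
    thus ?thesis using eq by simp
  qed
qed

lemma Sep_lo: "1 \<le> p \<Longrightarrow> p + 1 < l \<Longrightarrow> l \<le> k \<Longrightarrow> k \<le> NN \<Longrightarrow> br (e p) (E k l) = 0"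
proof (induction k)
  case 0 thus ?case by simp
next
  case (Suc k)
  show ?case
  proof (cases "Suc k = l")
    case True thus ?thesis using Suc.prems far[of p l] by auto
  next
    case False
    hence eq: "E (Suc k) l = br (e (Suc k)) (E k l)" using Suc.prems E_step[of l "Suc k"] by simp
    have "br (e p) (br (e (Suc k)) (E k l)) = 0"
      by (rule jB) (use Suc False He HE far in auto)
    thus ?thesis using eq by simp
  qed
qed

lemma RP: "2 \<le> j \<Longrightarrow> j \<le> i \<Longrightarrow> i \<le> NN \<Longrightarrow> br (E i j) (e (j - 1)) = E i (j - 1)"
proof (induction i)
  case 0 thus ?case by simp
next
  case (Suc i)
  show ?case
  proof (cases "Suc i = j")
    case True
    thus ?thesis using E_step[of "j - 1" j] by simp
  next
    case False
    hence eq: "E (Suc i) j = br (e (Suc i)) (E i j)" using Suc.prems E_step[of j "Suc i"] by simp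
    have f0: "br (e (Suc i)) (e (j - 1)) = 0" using far[of "Suc i" "j - 1"] Suc.prems False by fastforce
    have hj: "H (e (j - 1))" by (rule He) (use Suc.prems in auto)
    have "br (e (Suc i)) (br (E i j) (e (j - 1))) = br (br (e (Suc i)) (E i j)) (e (j - 1))"
      by (rule jA) (use Suc False hj He[of "Suc i"] HE f0 in auto)
    moreover have "br (E i j) (e (j - 1)) = E i (j - 1)" using Suc False by auto
    moreover have "E (Suc i) (j - 1) = br (e (Suc i)) (E i (j - 1))" using Suc.prems E_stepS[of "j - 1" i] by simp
    ultimately show ?thesis using eq by simp
  qed
qed


lemma Mtop: assumes "1 \<le> l" "l \<le> i" "i < NN" shows "br (e i) (E i l) = 0"
proof -
  consider "l = i" | "l = i - 1" "l < i" | "l < i - 1" using assms by linarith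
  thus ?thesis
  proof cases
    case 1 thus ?thesis using selfz[of i] assms by simp
  next
    case 2
    have "E i l = br (e i) (e (i - 1))" using 2 E_step[of l i] by simp
    moreover have "br (e (i - 1 + 1)) (br (e (i - 1 + 1)) (e (i - 1))) = 0"
      by (rule sq) (use assms 2 in auto)
    ultimately show ?thesis using 2 by simp
  next
    case 3
    define w where "w = E (i - 2) l"
    have Hw: "H w" unfolding w_def by (rule HE) (use assms 3 in auto)
    have Hei: "H (e i)" "H (e (i - 1))" by (rule He, use assms 3 in auto)+
    have eq: "E i l = br (e i) (br (e (i - 1)) w)"
      using E_step[of l i] E_step[of l "i - 1"] 3 unfolding w_def by (simp add: numeral_2_eq_2)
    have ew: "br (e i) w = 0" unfolding w_def by (rule Sep_hi) (use assms 3 in auto)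
    have s1: "br (e i) (br (e (i - 1)) w) = br (br (e i) (e (i - 1))) w"
      by (rule jA) (use Hei Hw ew in auto)
    have sqi: "br (e i) (br (e i) (e (i - 1))) = 0"
      using sq[of "i - 1"] assms 3 by simp
    have "br (e i) (br (br (e i) (e (i - 1))) w) = 0"
      by (rule jB) (use Hei Hw ew sqi H_br in auto)
    thus ?thesis using eq s1 by simp
  qed
qed

lemma K0: assumes "1 \<le> q" "q + 1 \<le> NN" shows "br (br (e q) (e (q+1))) (e q) = 0"
proof (rule anti_l0)
  show "H (e q)" "H (e (q+1))" by (rule He, use assms in auto)+
  show "br (br (e (q+1)) (e q)) (e q) = 0" by (rule rsq) (use assms in auto)
qed

lemma Keta: assumes "2 \<le> n" "1 \<le> l" "l \<le> n - 1"
  shows "br (br (e n) (e (n+1))) (E n l) = 0"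
  using assms(3)
proof (induction l rule: inc_induct)
  case base
  have "E n (n - 1) = br (e n) (e (n - 1))" using E_step[of "n - 1" n] assms by simp
  moreover have "br (br (e n) (e (n+1))) (br (e n) (e (n - 1))) = 0"
    by (rule anti_l0) (use eta2 assms He m1 in auto)
  ultimately show ?case by simp
next
  case (step l)
  have Hs: "H (e n)" "H (e (n+1))" "H (e l)" by (rule He, use assms step m1 in auto)+
  have HEn: "H (E n (Suc l))" by (rule HE) (use assms step m1 in auto)
  have eq: "E n l = br (E n (Suc l)) (e l)" using RP[of "Suc l" n] assms step m1 by simp
  have f1: "br (e (n+1)) (e l) = 0" by (rule far) (use assms step m1 in auto)
  have f2: "br (e n) (e l) = 0" by (rule far) (use assms step m1 in auto)
  have Pl: "br (br (e n) (e (n+1))) (e l) = 0"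
    by (rule jC) (use Hs f1 f2 in auto)
  have "br (br (e n) (e (n+1))) (br (E n (Suc l)) (e l)) = 0"
    by (rule jB) (use Hs HEn Pl step.IH H_br in auto)
  thus ?case using eq by simp
qed

lemma KK: assumes "1 \<le> l" "l \<le> q" "q + 1 \<le> NN"
  shows "br (br (e q) (e (q+1))) (E q l) = 0"
proof (cases "l = q")
  case True thus ?thesis using K0 assms by simp
next
  case lq: False
  show ?thesis
  proof (cases "q = n")
    case True thus ?thesis using Keta[of l] assms lq by simp
  next
    case qn: False
    define A where "A = e q"
    define B where "B = e (q+1)"
    define w where "w = E (q - 1) l"
    define v where "v = E q l"
    have hA: "hp False A" unfolding A_def using ehp[of q] assms qn by auto
    obtain b where hB: "hp b B" unfolding B_def using ehp[of "q+1"] assms by auto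
    have "H w" unfolding w_def by (rule HE) (use assms lq in auto)
    then obtain c where hw: "hp c w" unfolding H_def by blast
    have vdef: "v = br A w" unfolding v_def A_def w_def using E_step[of l q] assms lq by simp
    have hv: "hp (False \<noteq> c) v" using hp_br[OF hA hw] vdef by simp
    have Av: "br A v = 0" unfolding A_def v_def by (rule Mtop) (use assms in auto)
    have Bw: "br B w = 0" unfolding B_def w_def by (rule Sep_hi) (use assms lq in auto)
    have ABA: "br (br A B) A = 0" unfolding A_def B_def by (rule K0) (use assms in auto)
    have j1: "br A (br B v) = br (br A B) v + ssign False b (br B (br A v))"
      by (rule jac[OF hA hB hv])
    have j2: "br (br A B) (br A w) = br (br (br A B) A) w + ssign (False \<noteq> b) False (br A (br (br A B) w))"
      by (rule jac[OF hp_br[OF hA hB] hA hw])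
    have j3: "br A (br B w) = br (br A B) w + ssign False b (br B (br A w))"
      by (rule jac[OF hA hB hw])
    have X: "br A (br B v) = br (br A B) v" using j1 Av by simp
    have Z: "br (br A B) v = br A (br (br A B) w)" using j2 ABA vdef by simp
    have W: "br (br A B) w = - br B v" using j3 Bw vdef by (simp add: eq_neg_iff_add_eq_0)
    have "br (br A B) v = - br (br A B) v" using X Z W by simp
    hence "br (br A B) v + br (br A B) v = 0" by (simp add: eq_neg_iff_add_eq_0)
    hence "br (br A B) v = 0" by (rule two_zero)
    thus ?thesis unfolding A_def B_def v_def by simp
  qed
qed

lemma Mid: "1 \<le> l \<Longrightarrow> l \<le> p \<Longrightarrow> p < i \<Longrightarrow> i \<le> NN \<Longrightarrow> br (e p) (E i l) = 0"
proof (induction i)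
  case 0 thus ?case by simp
next
  case (Suc i)
  have eq: "E (Suc i) l = br (e (Suc i)) (E i l)" using Suc.prems E_stepS[of l i] by simp
  have Hs: "H (e p)" "H (e (Suc i))" by (rule He, use Suc.prems in auto)+
  have HEi: "H (E i l)" by (rule HE) (use Suc.prems in auto)
  show ?case
  proof (cases "p < i")
    case True
    have f: "br (e p) (e (Suc i)) = 0" by (rule far) (use Suc.prems True in auto)
    have "br (e p) (br (e (Suc i)) (E i l)) = 0"
      by (rule jB) (use Hs HEi f Suc.IH Suc.prems True in auto)
    thus ?thesis using eq by simp
  next
    case False
    hence pi: "p = i" using Suc.prems by simp
    have mt: "br (e i) (E i l) = 0" by (rule Mtop) (use Suc.prems pi in auto)
    have "br (e p) (br (e (Suc i)) (E i l)) = br (br (e p) (e (Suc i))) (E i l)"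
      by (rule jA) (use Hs HEi mt pi in auto)
    moreover have "br (br (e p) (e (p+1))) (E p l) = 0" by (rule KK) (use Suc.prems pi in auto)
    ultimately show ?thesis using eq pi by simp
  qed
qed


lemma Base1: assumes "1 \<le> j" "j \<le> i" "i \<le> NN" "1 \<le> k" "k \<le> i" "k < NN"
  shows "br (E i j) (e k) = (if j - 1 = k then E i k else 0)"
proof -
  have HEij: "H (E i j)" by (rule HE) (use assms in auto)
  have Hk: "H (e k)" by (rule He) (use assms in auto)
  consider "j - 1 = k" | "k + 1 < j" | "j \<le> k" "k = i" | "j \<le> k" "k < i" using assms by linarith
  thus ?thesis
  proof cases
    case 1
    thus ?thesis using RP[of j i] assms by auto
  next
    case 2
    have "br (e k) (E i j) = 0" by (rule Sep_lo) (use assms 2 in auto)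
    thus ?thesis using anti0[OF HEij Hk] 2 by auto
  next
    case 3
    have "br (e k) (E i j) = 0" using Mtop[of j i] assms 3 by simp
    thus ?thesis using anti0[OF HEij Hk] 3 assms by auto
  next
    case 4
    have "br (e k) (E i j) = 0" by (rule Mid) (use assms 4 in auto)
    thus ?thesis using anti0[OF HEij Hk] 4 assms by auto
  qed
qed

lemma Claim1: "1 \<le> l \<Longrightarrow> l \<le> k \<Longrightarrow> 1 \<le> j \<Longrightarrow> j \<le> i \<Longrightarrow> i \<le> NN \<Longrightarrow> k < NN \<Longrightarrow>
   (k < i \<or> (k = i \<and> l \<le> j)) \<Longrightarrow> br (E i j) (E k l) = (if j - 1 = k then E i l else 0)"
proof (induction k arbitrary: j l)
  case 0 thus ?case by simp
next
  case (Suc k)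
  show ?case
  proof (cases "l = Suc k")
    case True
    thus ?thesis using Base1[of j i "Suc k"] Suc.prems by auto
  next
    case False
    define W where "W = E k l"
    have eq: "E (Suc k) l = br (e (Suc k)) W" unfolding W_def using Suc.prems False E_stepS[of l k] by simp
    have HEij: "H (E i j)" by (rule HE) (use Suc.prems in auto)
    have Hk: "H (e (Suc k))" by (rule He) (use Suc.prems in auto)
    have HW: "H W" unfolding W_def by (rule HE) (use Suc.prems False in auto)
    obtain p q where J: "br (E i j) (br (e (Suc k)) W) = br (br (E i j) (e (Suc k))) W + ssign p q (br (e (Suc k)) (br (E i j) W))"
      using jacH[OF HEij Hk HW] by blast
    have b1: "br (E i j) (e (Suc k)) = (if j - 1 = Suc k then E i (Suc k) else 0)"
      by (rule Base1) (use Suc.prems in auto)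
    have ih1: "br (E i j) W = (if j - 1 = k then E i l else 0)"
      unfolding W_def by (rule Suc.IH) (use Suc.prems False in auto)
    show ?thesis
    proof (cases "j = Suc (Suc k)")
      case True
      have ih2: "br (E i (Suc k)) W = E i l"
        using Suc.IH[of l "Suc k"] Suc.prems False True unfolding W_def by auto
      show ?thesis using J b1 ih1 ih2 True eq by simp
    next
      case jn: False
      show ?thesis
      proof (cases "j = Suc k")
        case True
        have m0: "br (e (Suc k)) (E i l) = 0"
        proof (cases "Suc k = i")
          case True thus ?thesis using Mtop[of l i] Suc.prems False by simp
        next
          case False thus ?thesis using Mid[of l "Suc k" i] Suc.prems by simp
        qed
        show ?thesis using J b1 ih1 True eq m0 by simp
      next
        case False
        show ?thesis using J b1 ih1 False jn eq Suc.prems(3) by auto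
      qed
    qed
  qed
qed


abbreviation x where "x i \<equiv> E NN i"
abbreviation RR where "RR j k \<equiv> br (e NN) (br (x j) (x k))"

lemma NN2: "NN \<ge> 2" using m1 n1 by simp

lemma X1: "1 \<le> l \<Longrightarrow> l < NN \<Longrightarrow> 1 \<le> i \<Longrightarrow> i \<le> NN \<Longrightarrow> br (x i) (e l) = (if i - 1 = l then x l else 0)"
  using Claim1[of l l i NN] by simp

lemma Hx: "1 \<le> i \<Longrightarrow> i \<le> NN \<Longrightarrow> H (x i)" by (rule HE) auto

lemma xN: "x NN = e NN" by simp
lemma xN1: "x (NN - 1) = br (e NN) (e (NN - 1))" using E_step[of "NN - 1" NN] NN2 by simp

lemma HeN: "H (e NN)" "H (e (NN - 1))" by (rule He, use NN2 in auto)+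

lemma diffr[simp]: "br a (b - c) = br a b - br a c"
  using add_r[of a b "- c"] by simp

lemma comm: assumes "1 \<le> l" "l + 2 \<le> NN" "H Y" "br (e NN) Y = 0" shows "br (e NN) (br Y (e l)) = 0"
proof (rule jB)
  show "H (e NN)" "H Y" "H (e l)" using HeN assms He[of l] by auto
  show "br (br (e NN) Y) (e l) = 0" using assms by simp
  have "br (e NN) (e l) = 0" by (rule far) (use assms in auto)
  thus "br Y (br (e NN) (e l)) = 0" by simp
qed

lemma red: assumes "1 \<le> l" "l + 2 \<le> NN" "1 \<le> j" "j \<le> NN" "j \<noteq> l + 1"
  shows "br (x j) (x l) = br (br (x j) (x (l+1))) (e l)"
proof -
  have a: "br (x (l+1)) (e l) = x l" using X1[of l "l+1"] assms by simp
  have b: "br (x j) (e l) = 0" using X1[of l j] assms by auto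
  have "br (x j) (br (x (l+1)) (e l)) = br (br (x j) (x (l+1))) (e l)"
    by (rule jA) (use assms Hx He[of l] b in auto)
  thus ?thesis using a by simp
qed

lemma redR: assumes "1 \<le> l" "l + 2 \<le> NN" "1 \<le> j" "j \<le> NN" "j \<noteq> l + 1" "RR j (l+1) = 0"
  shows "RR j l = 0"
  using red[OF assms(1-5)] comm[OF assms(1,2) _ assms(6)] H_br Hx assms by simp

lemma symR: assumes "1 \<le> j" "j \<le> NN" "1 \<le> k" "k \<le> NN" "RR j k = 0" shows "RR k j = 0"
  by (rule anti_r0) (use assms Hx in auto)

lemma RNN: "RR NN NN = 0" using selfz[of NN] NN2 by simp
lemma RNN1: "RR NN (NN - 1) = 0" using cube xN1 by simp

lemma rsqN: "br (br (e NN) (e (NN - 1))) (e (NN - 1)) = 0"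
proof -
  have eq: "NN - 1 + 1 = NN" using NN2 by simp
  have "br (br (e (NN - 1 + 1)) (e (NN - 1))) (e (NN - 1)) = 0" by (rule rsq) (use NN2 in auto)
  thus ?thesis by (simp only: eq)
qed

lemma vu0: "br (br (e NN) (br (e NN) (e (NN - 1)))) (br (e NN) (e (NN - 1))) = 0"
proof -
  define E0 where "E0 = e NN"
  define F where "F = e (NN - 1)"
  define u where "u = br E0 F"
  define v where "v = br E0 u"
  have hE: "hp False E0" unfolding E0_def using ehp[of NN] m1 n1 by auto
  have uF: "br u F = 0" unfolding u_def E0_def F_def using rsqN by simp
  have Ev: "br E0 v = 0" unfolding v_def u_def E0_def F_def using cube by simp
  show ?thesis
  proof (cases "NN - 1 = n")
    case False
    have hF: "hp False F" unfolding F_def using ehp[of "NN - 1"] NN2 False by auto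
    have hu: "hp False u" unfolding u_def using hp_br[OF hE hF] by simp
    have hv: "hp False v" unfolding v_def using hp_br[OF hE hu] by simp
    have uu: "br u u = 0" using self_even[OF hu] .
    have HH: "H E0" "H F" "H u" "H v" using hE hF hu hv H_def by auto
    have vF: "br v F = 0" unfolding v_def by (rule jC) (use HH uF uu u_def in auto)
    have vE: "br v E0 = 0" by (rule anti0) (use HH Ev in auto)
    have "br v (br E0 F) = 0" by (rule jB) (use HH vE vF in auto)
    thus ?thesis unfolding v_def u_def E0_def F_def by simp
  next
    case True
    have hF: "hp True F" unfolding F_def using ehp[of "NN - 1"] NN2 True by auto
    have hu: "hp True u" unfolding u_def using hp_br[OF hE hF] by simp
    have hv: "hp True v" unfolding v_def using hp_br[OF hE hu] by simp
    have j1: "br u (br E0 F) = br (br u E0) F + ssign True False (br E0 (br u F))" by (rule jac[OF hu hE hF])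
    have a2: "br u E0 = - ssign True False (br E0 u)" by (rule anti[OF hu hE])
    have uu: "br u u = - br v F" using j1 a2 uF unfolding u_def[symmetric] v_def[symmetric] by (simp add: u_def)
    have j3: "br E0 (br v F) = br (br E0 v) F + ssign False True (br v (br E0 F))" by (rule jac[OF hE hv hF])
    have j4: "br E0 (br u u) = br (br E0 u) u + ssign False True (br u (br E0 u))" by (rule jac[OF hE hu hu])
    have a5: "br u v = - ssign True True (br v u)" by (rule anti[OF hu hv])
    have e1: "br E0 (br u u) = - br v u" using uu j3 Ev u_def by simp
    have e2: "br E0 (br u u) = br v u + br v u" using j4 a5 v_def by simp
    have "br v u + br v u + br v u = 0" using e1 e2 by (simp add: eq_neg_iff_add_eq_0 add.assoc)
    hence "br v u = 0" by (rule three_zero)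
    thus ?thesis unfolding v_def u_def E0_def F_def by simp
  qed
qed

lemma RA: "RR (NN - 1) (NN - 1) = 0"
proof -
  define E0 where "E0 = e NN"
  define F where "F = e (NN - 1)"
  define u where "u = br E0 F"
  define v where "v = br E0 u"
  have hE: "hp False E0" unfolding E0_def using ehp[of NN] m1 n1 by auto
  have uF: "br u F = 0" unfolding u_def E0_def F_def using rsqN by simp
  have Ev: "br E0 v = 0" unfolding v_def u_def E0_def F_def using cube by simp
  have vu: "br v u = 0" unfolding v_def u_def E0_def F_def using vu0 by simp
  have "br E0 (br u u) = 0"
  proof (cases "NN - 1 = n")
    case False
    have hF: "hp False F" unfolding F_def using ehp[of "NN - 1"] NN2 False by auto
    have hu: "hp False u" unfolding u_def using hp_br[OF hE hF] by simp
    show ?thesis using self_even[OF hu] by simp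
  next
    case True
    have hF: "hp True F" unfolding F_def using ehp[of "NN - 1"] NN2 True by auto
    have hu: "hp True u" unfolding u_def using hp_br[OF hE hF] by simp
    have hv: "hp True v" unfolding v_def using hp_br[OF hE hu] by simp
    have j1: "br u (br E0 F) = br (br u E0) F + ssign True False (br E0 (br u F))" by (rule jac[OF hu hE hF])
    have a2: "br u E0 = - ssign True False (br E0 u)" by (rule anti[OF hu hE])
    have uu: "br u u = - br v F" using j1 a2 uF unfolding u_def[symmetric] v_def[symmetric] by (simp add: u_def)
    have j3: "br E0 (br v F) = br (br E0 v) F + ssign False True (br v (br E0 F))" by (rule jac[OF hE hv hF])
    show ?thesis using uu j3 Ev vu u_def by simp
  qed
  thus ?thesis using xN1 unfolding E0_def F_def u_def by simp
qed


lemma RB: assumes N3: "NN \<ge> 3" shows "RR (NN - 1) (NN - 2) = 0"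
proof -
  define E0 where "E0 = e NN"
  define F where "F = e (NN - 1)"
  define G where "G = e (NN - 2)"
  define u where "u = br E0 F"
  define v where "v = br E0 u"
  define t where "t = br F G"
  define w where "w = br E0 t"
  have hE: "hp False E0" unfolding E0_def using ehp[of NN] m1 n1 by auto
  have hG0: "hp (NN - 2 = n) G" unfolding G_def by (rule ehp) (use N3 in auto)
  then obtain g where hG: "hp g G" by blast
  have xw: "x (NN - 2) = w"
  proof -
    have a: "E NN (NN - 2) = br (e NN) (E (NN - 1) (NN - 2))" using E_step[of "NN - 2" NN] N3 by simp
    have b: "E (NN - 1) (NN - 2) = br (e (NN - 1)) (e (NN - 2))"
      using E_step[of "NN - 2" "NN - 1"] N3 by (simp add: numeral_2_eq_2)
    show ?thesis using a b unfolding w_def t_def E0_def F_def G_def by simp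
  qed
  have xu: "x (NN - 1) = u" using xN1 unfolding u_def E0_def F_def by simp
  have EG: "br E0 G = 0" unfolding E0_def G_def by (rule far) (use N3 in auto)
  have uF: "br u F = 0" unfolding u_def E0_def F_def using rsqN by simp
  have Ev: "br E0 v = 0" unfolding v_def u_def E0_def F_def using cube by simp
  have vu: "br v u = 0" unfolding v_def u_def E0_def F_def using vu0 by simp
  have "br E0 (br u w) = 0"
  proof (cases "NN - 1 = n")
    case True
    have hF: "hp True F" unfolding F_def using ehp[of "NN - 1"] N3 True by auto
    have "NN - 2 \<noteq> n" using N3 True by simp
    hence hG': "hp False G" using hG0 by simp
    have hu: "hp True u" unfolding u_def using hp_br[OF hE hF] by simp
    have hv: "hp True v" unfolding v_def using hp_br[OF hE hu] by simp
    have hF': "H F" using hF H_def by auto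
    have wu: "w = br u G" unfolding w_def t_def u_def
      by (rule jA) (use hE hF' hG' EG H_def in auto)
    have hw: "hp True w" unfolding wu using hp_br[OF hu hG'] by simp
    have k1: "br E0 (br u w) = br (br E0 u) w + ssign False True (br u (br E0 w))" by (rule jac[OF hE hu hw])
    have k2: "br E0 (br u G) = br (br E0 u) G + ssign False True (br u (br E0 G))" by (rule jac[OF hE hu hG'])
    have k3: "br v (br u G) = br (br v u) G + ssign True True (br u (br v G))" by (rule jac[OF hv hu hG'])
    have Ew: "br E0 w = br v G" using k2 EG unfolding wu v_def by simp
    have vw: "br v w = - br u (br v G)" using k3 vu unfolding wu by simp
    show ?thesis using k1 Ew vw unfolding v_def[symmetric] by simp
  next
    case False
    have hF: "hp False F" unfolding F_def using ehp[of "NN - 1"] N3 False by auto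
    have hu: "hp False u" unfolding u_def using hp_br[OF hE hF] by simp
    have hv: "hp False v" unfolding v_def using hp_br[OF hE hu] by simp
    have ht: "hp g t" unfolding t_def using hp_br[OF hF hG] by simp
    have hw: "hp g w" unfolding w_def using hp_br[OF hE ht] by simp
    have hEw: "hp g (br E0 w)" using hp_br[OF hE hw] by simp
    have wu: "w = br u G" unfolding w_def t_def u_def
      by (rule jA) (use hE hF hG EG H_def in auto)
    have Ft: "br F t = 0"
    proof -
      have eq: "NN - 2 + 1 = NN - 1" using N3 by simp
      have "br (e (NN - 2 + 1)) (br (e (NN - 2 + 1)) (e (NN - 2))) = 0" by (rule sq) (use N3 in auto)
      thus ?thesis unfolding F_def t_def G_def by (simp only: eq)
    qed
    have Fu: "br F u = 0" using anti[OF hF hu] uF by simp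
    have s3: "br E0 (br F t) = br (br E0 F) t + ssign False False (br F (br E0 t))" by (rule jac[OF hE hF ht])
    have s4: "br F (br u G) = br (br F u) G + ssign False False (br u (br F G))" by (rule jac[OF hF hu hG])
    have a1: "br u t + br F w = 0" using s3 Ft unfolding u_def[symmetric] w_def[symmetric] by simp
    have a2: "br F w = br u t" using s4 Fu unfolding wu[symmetric] t_def[symmetric] by simp
    have "br u t + br u t = 0" using a1 a2 by simp
    hence "br u t = 0" by (rule two_zero)
    hence Fw: "br F w = 0" using a2 by simp
    have s6: "br E0 (br u G) = br (br E0 u) G + ssign False False (br u (br E0 G))" by (rule jac[OF hE hu hG])
    have Ew: "br E0 w = br v G" using s6 EG unfolding wu[symmetric] v_def[symmetric] by simp
    have s6b: "br E0 (br v G) = br (br E0 v) G + ssign False False (br v (br E0 G))" by (rule jac[OF hE hv hG])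
    have EEw: "br E0 (br E0 w) = 0" using s6b Ev EG Ew by simp
    have s5: "br E0 (br F (br E0 w)) = br (br E0 F) (br E0 w) + ssign False False (br F (br E0 (br E0 w)))"
      by (rule jac[OF hE hF hEw])
    have b5: "br E0 (br F (br E0 w)) = br u (br E0 w)" using s5 EEw unfolding u_def[symmetric] by simp
    have s8: "br E0 (br F w) = br (br E0 F) w + ssign False False (br F (br E0 w))" by (rule jac[OF hE hF hw])
    have b8: "br u w = - br F (br E0 w)" using s8 Fw unfolding u_def[symmetric]
      by (simp add: eq_neg_iff_add_eq_0)
    have Y1: "br E0 (br u w) = - br u (br E0 w)" using b8 b5 by simp
    have s9: "br E0 (br u w) = br (br E0 u) w + ssign False False (br u (br E0 w))" by (rule jac[OF hE hu hw])
    have Y2: "br E0 (br u w) = br v w + br u (br E0 w)" using s9 unfolding v_def[symmetric] by simp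
    have uv: "br u v = 0" using anti[OF hu hv] vu by simp
    have s11: "br u (br v G) = br (br u v) G + ssign False False (br v (br u G))" by (rule jac[OF hu hv hG])
    have b11: "br u (br E0 w) = br v w" using s11 uv Ew unfolding wu[symmetric] by simp
    have "br v w + br v w + br v w = 0" using Y1 Y2 b11 by (simp add: eq_neg_iff_add_eq_0 add.assoc)
    hence "br v w = 0" by (rule three_zero)
    thus ?thesis using Y1 b11 by simp
  qed
  thus ?thesis using xw xu unfolding E0_def by simp
qed


lemma RN: assumes "1 \<le> j" "j \<le> NN" shows "RR NN j = 0"
  using assms(2)
proof (induction j rule: inc_induct)
  case base thus ?case using RNN by simp
next
  case (step j)
  show ?case
  proof (cases "j = NN - 1")
    case True thus ?thesis using RNN1 by simp
  next
    case False
    show ?thesis by (rule redR) (use False step assms NN2 in auto)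
  qed
qed

lemma RN1: assumes "1 \<le> j" "j \<le> NN - 1" shows "RR (NN - 1) j = 0"
  using assms(2)
proof (induction j rule: inc_induct)
  case base thus ?case using RA by simp
next
  case (step j)
  show ?case
  proof (cases "j = NN - 2")
    case True thus ?thesis using RB step assms by simp
  next
    case False
    show ?thesis by (rule redR) (use False step assms NN2 in auto)
  qed
qed

lemma Zk: assumes "1 \<le> k" "k \<le> NN - 1" shows "RR (k+1) k = 0"
  using assms(2)
proof (induction k rule: inc_induct)
  case base
  have eq: "NN - 1 + 1 = NN" using NN2 by simp
  show ?case using RNN1 by (simp only: eq)
next
  case (step k)
  show ?case
  proof (cases "k = NN - 2")
    case True
    hence "k + 1 = NN - 1" using step by simp
    thus ?thesis using RB True step assms by simp
  next
    case False
    have k3: "k + 3 \<le> NN" using False step by simp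
    have a: "RR (k+2) (k+1) = 0" using step.IH by (simp add: numeral_2_eq_2)
    have k1: "1 \<le> k" using step assms by simp
    have b: "RR (k+2) k = 0" using redR[of k "k+2"] a k3 k1 by simp
    have c: "RR k (k+2) = 0" using symR[of "k+2" k] b k3 k1 by simp
    have c': "RR k (k+1+1) = 0" using c by (simp add: numeral_2_eq_2)
    have d: "RR k (k+1) = 0" using redR[of "k+1" k] c' k3 k1 by simp
    show ?thesis using symR[of k "k+1"] d k3 k1 by simp
  qed
qed

lemma Rall: assumes "1 \<le> k" "k \<le> NN" shows "\<forall>j. 1 \<le> j \<and> j \<le> NN \<longrightarrow> RR j k = 0"
  using assms(2)
proof (induction k rule: inc_induct)
  case base
  show ?case
  proof (intro allI impI)
    fix j assume j: "1 \<le> j \<and> j \<le> NN"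
    show "RR j NN = 0" by (rule symR[OF _ _ _ _ RN[of j]]) (use j NN2 in auto)
  qed
next
  case (step k)
  show ?case
  proof (intro allI impI)
    fix j assume j: "1 \<le> j \<and> j \<le> NN"
    show "RR j k = 0"
    proof (cases "k = NN - 1")
      case True
      consider "j = NN" | "j = NN - 1" | "j < NN - 1" using j by linarith
      thus ?thesis
      proof cases
        case 1
        have "RR NN k = 0" by (rule RN) (use True step assms in auto)
        thus ?thesis using 1 by simp
      next
        case 2 thus ?thesis using RA True by simp
      next
        case 3
        have "RR (NN - 1) j = 0" by (rule RN1) (use j 3 in auto)
        thus ?thesis using symR[of "NN - 1" j] True j NN2 by simp
      qed
    next
      case False
      show ?thesis
      proof (cases "j = k + 1")
        case True thus ?thesis using Zk[of k] step assms False by simp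
      next
        case jn: False
        have r: "RR j (k+1) = 0" using step.IH j by simp
        have k1: "1 \<le> k" "k + 2 \<le> NN" using step assms False by auto
        show ?thesis using redR[of k j] r k1 j jn by simp
      qed
    qed
  qed
qed

lemma Tall: assumes "1 \<le> i" "i \<le> NN"
  shows "\<forall>j k. 1 \<le> j \<and> j \<le> NN \<and> 1 \<le> k \<and> k \<le> NN \<longrightarrow> br (x i) (br (x j) (x k)) = 0"
  using assms(2)
proof (induction i rule: inc_induct)
  case base
  show ?case using Rall by auto
next
  case (step i)
  show ?case
  proof (intro allI impI)
    fix j k assume jk: "1 \<le> j \<and> j \<le> NN \<and> 1 \<le> k \<and> k \<le> NN"
    define Y where "Y = br (x j) (x k)"
    have i1: "1 \<le> i" using step assms by simp
    have HY: "H Y" unfolding Y_def using Hx jk H_br by auto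
    have Hei: "H (e i)" by (rule He) (use i1 step in auto)
    have HxS: "H (x (Suc i))" by (rule Hx) (use step in auto)
    have Hxj: "H (x j)" "H (x k)" using Hx jk by auto
    have xi: "br (x (Suc i)) (e i) = x i" using X1[of i "Suc i"] i1 step by simp
    obtain p q where J: "br (x j) (br (x k) (e i)) = br Y (e i) + ssign p q (br (x k) (br (x j) (e i)))"
      using jacH[OF Hxj Hei] unfolding Y_def by blast
    have Yi: "br Y (e i) = br (x j) (br (x k) (e i)) - ssign p q (br (x k) (br (x j) (e i)))"
      using J by (metis add_diff_cancel_right')
    have t1: "br (x (Suc i)) (br (x j) (br (x k) (e i))) = 0"
    proof -
      have "br (x k) (e i) = (if k - 1 = i then x i else 0)" by (rule X1) (use i1 step jk in auto)
      thus ?thesis using step.IH jk i1 by auto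
    qed
    have t2: "br (x (Suc i)) (br (x k) (br (x j) (e i))) = 0"
    proof -
      have "br (x j) (e i) = (if j - 1 = i then x i else 0)" by (rule X1) (use i1 step jk in auto)
      thus ?thesis using step.IH jk i1 by auto
    qed
    have a: "br (x (Suc i)) (br Y (e i)) = 0" using Yi t1 t2 by simp
    have b: "br (x (Suc i)) (br (e i) Y) = 0" by (rule anti_r0) (use HY Hei a in auto)
    have c: "br (e i) (br (x (Suc i)) Y) = 0" using step.IH jk unfolding Y_def by simp
    have "br (br (x (Suc i)) (e i)) Y = 0" by (rule jC) (use HxS Hei HY b c in auto)
    thus "br (x i) (br (x j) (x k)) = 0" using xi unfolding Y_def by simp
  qed
qed

lemma Part3: assumes "i \<in> {1..NN}" "j \<in> {1..NN}" "k \<in> {1..NN}" "l \<in> {1..NN}"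
  shows "br (br (x i) (x j)) (br (x k) (x l)) = 0"
proof -
  have HP: "H (br (x i) (x j))" using Hx H_br assms by auto
  have Hk: "H (x k)" "H (x l)" using Hx assms by auto
  have a: "br (br (x i) (x j)) (x k) = 0" by (rule anti0) (use HP Hk Tall assms in auto)
  have b: "br (br (x i) (x j)) (x l) = 0" by (rule anti0) (use HP Hk Tall assms in auto)
  show ?thesis by (rule jB) (use HP Hk a b in auto)
qed

lemma main:
  "(\<forall>i\<in>{1..m+n}. \<forall>j\<in>{1..m+n}. \<forall>k\<in>{1..m+n}. \<forall>l\<in>{1..m+n}.
            i \<ge> j \<and> k \<ge> l \<and> (i > k \<or> (i = k \<and> j \<ge> l)) \<and> k < m + n \<longrightarrow>
            br (Eij br e i j) (Eij br e k l) = (if j - 1 = k then Eij br e i l else 0))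
       \<and> (\<forall>i\<in>{1..m+n}. \<forall>j\<in>{1..m+n}. \<forall>k\<in>{1..m+n}.
            br (Eij br e (m+n) i) (br (Eij br e (m+n) j) (Eij br e (m+n) k)) = 0)
       \<and> (\<forall>i\<in>{1..m+n}. \<forall>j\<in>{1..m+n}. \<forall>k\<in>{1..m+n}. \<forall>l\<in>{1..m+n}.
            br (br (Eij br e (m+n) i) (Eij br e (m+n) j))
               (br (Eij br e (m+n) k) (Eij br e (m+n) l)) = 0)"
proof (intro conjI ballI impI)
  fix i j k l assume "i \<in> {1..m+n}" "j \<in> {1..m+n}" "k \<in> {1..m+n}" "l \<in> {1..m+n}"
    "i \<ge> j \<and> k \<ge> l \<and> (i > k \<or> (i = k \<and> j \<ge> l)) \<and> k < m + n"
  thus "br (Eij br e i j) (Eij br e k l) = (if j - 1 = k then Eij br e i l else 0)"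
    using Claim1[of l k j i] by auto
next
  fix i j k assume "i \<in> {1..m+n}" "j \<in> {1..m+n}" "k \<in> {1..m+n}"
  thus "br (Eij br e (m+n) i) (br (Eij br e (m+n) j) (Eij br e (m+n) k)) = 0"
    using Tall[of i] by auto
next
  fix i j k l assume "i \<in> {1..m+n}" "j \<in> {1..m+n}" "k \<in> {1..m+n}" "l \<in> {1..m+n}"
  thus "br (br (Eij br e (m+n) i) (Eij br e (m+n) j)) (br (Eij br e (m+n) k) (Eij br e (m+n) l)) = 0"
    using Part3 by blast
qed

end

theorem lemma4p3:
  fixes sc :: "'k::field \<Rightarrow> 'v::ab_group_add \<Rightarrow> 'v"
    and br :: "'v \<Rightarrow> 'v \<Rightarrow> 'v"
    and V0 V1 :: "'v set"
    and e h f :: "nat \<Rightarrow> 'v"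
    and m n :: nat
  assumes "m \<ge> 1" and "n \<ge> 1"
    and "(2::'k) \<noteq> 0" and "(3::'k) \<noteq> 0"
    and "lie_superalgebra sc V0 V1 br"
    and "km_rels sc V0 V1 br {1..m+n} {n} (cartan m n) e h f"
  shows "(\<forall>i\<in>{1..m+n}. \<forall>j\<in>{1..m+n}. \<forall>k\<in>{1..m+n}. \<forall>l\<in>{1..m+n}.
            i \<ge> j \<and> k \<ge> l \<and> (i > k \<or> (i = k \<and> j \<ge> l)) \<and> k < m + n \<longrightarrow>
            br (Eij br e i j) (Eij br e k l) = (if j - 1 = k then Eij br e i l else 0))
       \<and> (\<forall>i\<in>{1..m+n}. \<forall>j\<in>{1..m+n}. \<forall>k\<in>{1..m+n}.
            br (Eij br e (m+n) i) (br (Eij br e (m+n) j) (Eij br e (m+n) k)) = 0)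
       \<and> (\<forall>i\<in>{1..m+n}. \<forall>j\<in>{1..m+n}. \<forall>k\<in>{1..m+n}. \<forall>l\<in>{1..m+n}.
            br (br (Eij br e (m+n) i) (Eij br e (m+n) j))
               (br (Eij br e (m+n) k) (Eij br e (m+n) l)) = 0)"
proof -
  interpret KM sc br V0 V1 e h f m n using assms by unfold_locales
  show ?thesis by (rule main)
qed

end
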